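(* Fix $n$ and consider a model $\mathcal M$ with block hyper-$g$ prior (hyperparameter $2<a\le4$) on blocks $X_1,\dots,X_k$ ($X_j$ of size $n\times p_j$, $p=\sum_jp_j$) satisfying the block orthogonality condition. Its Bayes factor against the null (intercept-only) model $\mathcal M_0$ is $$BF(\mathcal M:\mathcal M_0)=\Big(\frac{a-2}{2}\Big)^k\int_{(0,1)^k}\prod_{j=1}^k(1-t_j)^{\frac{a+p_j}{2}-2}\Big(1-\sum_{j=1}^kt_jR_j^2\Big)^{-\frac{n-1}{2}}dt .$$ Then $BF(\mathcal M:\mathcal M_0)\to\infty$ (information consistency) under either of the following conditions: (1) $R^2=\sum_{j=1}^kR_j^2\to1$ and $n>k(a-2)+p+1$; (2) for some $i\in\{1,\dots,k\}$, $R_i^2\to1$ and $n\ge a+p_i-1$.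
   Context: Block hyper-$g$ prior: $y\mid\alpha,\beta,\sigma^2\sim N(\alpha\mathbf 1+X\beta,\sigma^2I)$, $X=(X_1,\dots,X_k)$ of full column rank; $\beta\mid g,\sigma^2\sim N(0,A\sigma^2)$ with $A$ block diagonal with blocks $g_j(X_j^TX_j)^{-1}$; $\pi(\alpha,\sigma^2)\propto1/\sigma^2$; $g_j$ independent with densities $\frac{a-2}{2}(1+g_j)^{-a/2}$. Block orthogonality condition: predictors and response centered, $X_i^TX_j=0$ for $i\neq j$. $R_j^2=y^TP_{X_j}y/y^Ty$ with $P_{X_j}$ the projection onto the column space of $X_j$; under block orthogonality $R^2=\sum_jR_j^2$ is the coefficient of determination. Information consistency means $BF(\mathcal M:\mathcal M_0)\to\infty$ whenever $R^2\to1$ for fixed $n$ (limits in the data). *)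

theory Defs
  imports "HOL-Probability.Probability"
begin

text \<open>Bayes factor of the block hyper-g model (blocks indexed by 0..k-1) against the
  intercept-only null model, as a function of the sample size n, hyperparameter a,
  block sizes p j and the block coefficients R j = R_j^2 (explicit formula of the paper).\<close>

definition unit_cube :: "nat \<Rightarrow> (nat \<Rightarrow> real) set" where
  "unit_cube k = {t. \<forall>j<k. 0 < t j \<and> t j < 1}"

definition block_hyper_g_BF ::
  "nat \<Rightarrow> real \<Rightarrow> nat \<Rightarrow> (nat \<Rightarrow> nat) \<Rightarrow> (nat \<Rightarrow> real) \<Rightarrow> ennreal" where
  "block_hyper_g_BF n a k p R =
     ennreal (((a - 2) / 2) ^ k) *
     (\<integral>\<^sup>+ t. indicator (unit_cube k) t *
         ennreal ((\<Prod>j<k. (1 - t j) powr ((a + real (p j)) / 2 - 2)) *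
                  (1 - (\<Sum>j<k. t j * R j)) powr (- (real n - 1) / 2))
       \<partial>(PiM {..<k} (\<lambda>_. lborel)))"

end

theory Submission
  imports Defs
begin


lemma PiM_lborel_prod:
  fixes f :: "nat \<Rightarrow> real \<Rightarrow> ennreal"
  assumes "finite I" "\<And>i. i \<in> I \<Longrightarrow> f i \<in> borel_measurable borel"
  shows "(\<integral>\<^sup>+ x. (\<Prod>i\<in>I. f i (x i)) \<partial>PiM I (\<lambda>_. lborel)) = (\<Prod>i\<in>I. \<integral>\<^sup>+ x. f i x \<partial>lborel)"
proof -
  interpret product_sigma_finite "\<lambda>_::nat. lborel::real measure"
    by standard
  show ?thesis using assms by (intro product_nn_integral_prod) auto
qed

lemma powr_lb:
  fixes s d b :: real
  assumes "0 < d" "d/2 \<le> s" "s \<le> d"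
  shows "d powr b * 2 powr (-\<bar>b\<bar>) \<le> s powr b"
proof (cases "b \<ge> 0")
  case True
  have s0: "0 \<le> d/2" using assms by simp
  have A: "(d/2) powr b \<le> s powr b" by (rule powr_mono2) (use True s0 assms(2) in auto)
  have "(d/2) powr b = d powr b / 2 powr b"
    by (rule powr_divide)
  also have "\<dots> = d powr b * 2 powr (-\<bar>b\<bar>)"
    using True by (simp add: powr_minus divide_inverse)
  finally show ?thesis using A by simp
next
  case False
  have A: "d powr b \<le> s powr b"
    by (rule powr_mono2') (use assms False in auto)
  have "2 powr (-\<bar>b\<bar>) \<le> 2 powr 0" by (rule powr_mono) auto
  then have B: "2 powr (-\<bar>b\<bar>) \<le> 1" by simp
  have "d powr b * 2 powr (-\<bar>b\<bar>) \<le> d powr b * 1"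
    by (rule mult_left_mono[OF B]) simp
  then show ?thesis using A by simp
qed

lemma tendsto_top_lb:
  fixes X :: "nat \<Rightarrow> ennreal"
  assumes "eventually (\<lambda>m. ennreal (g m) \<le> X m) sequentially" "filterlim g at_top sequentially"
  shows "X \<longlonglongrightarrow> \<infinity>"
proof -
  have T: "((\<lambda>m. ennreal (g m)) \<longlongrightarrow> top) sequentially"
    using assms(2) ennreal_tendsto_top_eq_at_top by blast
  show ?thesis unfolding infinity_ennreal_def
  proof (rule order_tendstoI)
    fix y :: ennreal assume "y < top"
    then have "eventually (\<lambda>m. y < ennreal (g m)) sequentially" by (rule order_tendstoD(1)[OF T])
    then show "eventually (\<lambda>m. y < X m) sequentially"
      using assms(1) by eventually_elim (rule less_le_trans)
  next
    fix y :: ennreal assume "top < y" then show "eventually (\<lambda>m. X m < y) sequentially" by simp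
  qed
qed

lemma powr_neg_at_right:
  fixes E :: real assumes "E < 0"
  shows "filterlim (\<lambda>x::real. x powr E) at_top (at_right 0)"
proof -
  have ev: "\<forall>\<^sub>F x in at_right (0::real). 0 < x" by (rule eventually_at_right_less)
  have ev0: "\<forall>\<^sub>F x in at_right (0::real). 0 \<le> x"
    using ev by (rule eventually_mono) simp
  have mE: "0 < - E" using assms by simp
  have "((\<lambda>x. x powr (-E)) \<longlongrightarrow> 0) (at_right (0::real))"
    by (rule tendsto_zero_powrI[OF tendsto_ident_at tendsto_const ev0 mE])
  moreover have "eventually (\<lambda>x. 0 < x powr (-E)) (at_right (0::real))"
    using ev by (rule eventually_mono) simp
  ultimately have L: "filterlim (\<lambda>x. inverse (x powr (-E))) at_top (at_right (0::real))"
    by (rule filterlim_inverse_at_top)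
  have "eventually (\<lambda>x. inverse (x powr (-E)) = x powr E) (at_right (0::real))"
    using ev by (rule eventually_mono) (simp add: powr_minus)
  then show ?thesis
    using filterlim_cong[OF refl refl, of "\<lambda>x. inverse (x powr -E)" "\<lambda>x. x powr E" "at_right (0::real)" at_top] L
    by simp
qed

lemma neg_ln_lim:
  fixes d :: "nat \<Rightarrow> real"
  assumes "d \<longlonglongrightarrow> 0" "\<And>m. 0 < d m"
  shows "filterlim (\<lambda>m. - ln (d m) - ln 2) at_top sequentially"
proof -
  have "filterlim d (at_right 0) sequentially"
    using assms by (intro tendsto_imp_filterlim_at_right) auto
  then have "filterlim (\<lambda>m. ln (d m)) at_bot sequentially"
    using ln_at_0 filterlim_compose by blast
  then have "filterlim (\<lambda>m. - ln (d m)) at_top sequentially"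
    by (simp add: filterlim_uminus_at_top)
  then have "filterlim (\<lambda>m. (- ln 2) + - ln (d m)) at_top sequentially"
    by (intro filterlim_tendsto_add_at_top[OF tendsto_const])
  then show ?thesis by (simp add: algebra_simps)
qed
lemma half_enn: "0 \<le> x \<Longrightarrow> ennreal (x / 2) = ennreal x * inverse 2"
  by (simp add: divide_ennreal[symmetric] divide_ennreal_def)

lemma FTC_part:
  fixes C d :: real
  assumes "0 < d" "d \<le> 1/2" "0 \<le> C"
  shows "(\<integral>\<^sup>+ x. indicator {1/2..1-d} x * ennreal (C / (1 - x)) \<partial>lborel) = ennreal (C * (- ln d - ln 2))"
proof -
  have "(\<integral>\<^sup>+ x. ennreal (C / (1 - x)) * indicator {1/2..1-d} x \<partial>lborel)
      = ennreal ((\<lambda>x. - (C * ln (1 - x))) (1-d) - (\<lambda>x. - (C * ln (1 - x))) (1/2))"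
  proof (rule nn_integral_FTC_Icc)
    show "(\<lambda>x. C / (1 - x)) \<in> borel_measurable borel" by measurable
    fix x :: real assume x: "x \<in> {1/2..1-d}"
    then have "x < 1" using assms by auto
    then show "((\<lambda>x. - (C * ln (1 - x))) has_real_derivative C / (1 - x)) (at x)"
      by (auto intro!: derivative_eq_intros simp: field_simps)
    show "0 \<le> C / (1 - x)" using x assms by auto
  next
    show "1/2 \<le> 1 - d" using assms by simp
  qed
  also have "(\<lambda>x. - (C * ln (1 - x))) (1-d) - (\<lambda>x. - (C * ln (1 - x))) (1/2) = C * (- ln d - ln 2)"
    by (simp add: ln_div algebra_simps)
  finally show ?thesis by (simp add: mult.commute)
qed

lemma case2_lb:
  fixes b :: "nat \<Rightarrow> real" and c d :: real and R :: "nat \<Rightarrow> real"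
  assumes ik: "i < k" and R0: "\<And>j. j<k \<Longrightarrow> 0 \<le> R j" and Rs: "(\<Sum>j<k. R j) < 1"
    and dR: "d = 1 - R i" and d0: "0 < d" and d2: "d \<le> 1/2" and c: "0 \<le> c"
    and bc: "b i - c \<le> -1"
  shows "ennreal ((\<Prod>j\<in>{..<k}-{i}. 2 powr (-\<bar>b j\<bar>) * (1/2)) * (2 powr (-c) * (- ln d - ln 2)))
    \<le> (\<integral>\<^sup>+ t. indicator (unit_cube k) t * ennreal ((\<Prod>j<k. (1 - t j) powr b j) *
           (1 - (\<Sum>j<k. t j * R j)) powr (-c)) \<partial>PiM {..<k} (\<lambda>_. lborel))"
proof -
  define C where "C = 2 powr (-c)"
  define w where "w j = 2 powr (-\<bar>b j\<bar>)" for j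
  define f where "f j x = (if j = i then indicator {1/2..1-d} x * ennreal (C / (1 - x))
      else indicator {0<..<1/2} x * ennreal (w j))" for j x
  have w0: "0 \<le> w j" for j unfolding w_def by simp
  have C0: "0 < C" unfolding C_def by simp
  have fin: "finite ({..<k} - {i})" by simp
  have pt: "(\<Prod>j<k. f j (t j))
     \<le> indicator (unit_cube k) t * ennreal ((\<Prod>j<k. (1 - t j) powr b j) *
           (1 - (\<Sum>j<k. t j * R j)) powr (-c))" for t
  proof (cases "t i \<in> {1/2..1-d} \<and> (\<forall>j<k. j \<noteq> i \<longrightarrow> t j \<in> {0<..<1/2})")
    case True
    have ti: "1/2 \<le> t i" "t i \<le> 1 - d" using True by auto
    have tj: "0 < t j" "t j < 1/2" if "j<k" "j \<noteq> i" for j using True that by auto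
    have cb: "0 < t j \<and> t j < 1" if "j<k" for j
      using tj[OF that] ti d0 by (cases "j = i") auto
    have t0: "0 \<le> t j" "t j \<le> 1" if "j<k" for j using cb[OF that] by auto
    have cube: "t \<in> unit_cube k" using cb by (simp add: unit_cube_def)
    define s where "s = 1 - t i"
    have s: "d \<le> s" "s \<le> 1/2" "0 < s" using ti d0 unfolding s_def by auto
    have lhs: "(\<Prod>j<k. f j (t j)) = ennreal (C / s * (\<Prod>j\<in>{..<k}-{i}. w j))"
    proof -
      have "(\<Prod>j<k. f j (t j)) = f i (t i) * (\<Prod>j\<in>{..<k}-{i}. f j (t j))"
        using ik by (simp add: prod.remove)
      also have "(\<Prod>j\<in>{..<k}-{i}. f j (t j)) = (\<Prod>j\<in>{..<k}-{i}. ennreal (w j))"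
        using tj by (intro prod.cong refl) (auto simp: f_def)
      also have "\<dots> = ennreal (\<Prod>j\<in>{..<k}-{i}. w j)" using w0 by (simp add: prod_ennreal)
      also have "f i (t i) = ennreal (C / s)" using ti by (simp add: f_def s_def)
      moreover have "0 \<le> C / s" using C0 s by simp
      moreover have "0 \<le> (\<Prod>j\<in>{..<k}-{i}. w j)" using w0 by (simp add: prod_nonneg)
      ultimately show ?thesis by (metis ennreal_mult)
    qed
    have split: "(\<Prod>j<k. (1 - t j) powr b j) = s powr b i * (\<Prod>j\<in>{..<k}-{i}. (1 - t j) powr b j)"
      using ik by (simp add: prod.remove s_def)
    have i1: "(\<Prod>j\<in>{..<k}-{i}. w j) \<le> (\<Prod>j\<in>{..<k}-{i}. (1 - t j) powr b j)"
    proof (intro prod_mono conjI)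
      fix j assume j: "j \<in> {..<k}-{i}"
      show "0 \<le> w j" by (rule w0)
      have "1 powr b j * 2 powr (-\<bar>b j\<bar>) \<le> (1 - t j) powr b j"
        using tj[of j] j by (intro powr_lb) auto
      then show "w j \<le> (1 - t j) powr b j" by (simp add: w_def)
    qed
    define X where "X = 1 - (\<Sum>j<k. t j * R j)"
    have "(\<Sum>j<k. t j * R j) \<le> (\<Sum>j<k. R j)"
      using t0 R0 by (intro sum_mono mult_left_le_one_le) auto
    then have X0: "0 < X" using Rs unfolding X_def by linarith
    have "t i * R i \<le> (\<Sum>j<k. t j * R j)"
      using ik t0 R0 by (intro member_le_sum[where f="\<lambda>j. t j * R j"]) auto
    then have "X \<le> 1 - t i * R i" unfolding X_def by linarith
    also have "\<dots> = s + t i * d" by (simp add: s_def dR algebra_simps)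
    also have "\<dots> \<le> 2 * s" using s t0[OF ik] d0
      by (smt (verit) mult_left_le_one_le)
    finally have X2: "X \<le> 2 * s" .
    have "C / s = C * s powr (-1)" using s by (simp add: powr_minus_divide)
    also have "\<dots> \<le> C * s powr (b i - c)"
      using bc s C0 by (intro mult_left_mono powr_mono') auto
    also have "\<dots> = s powr b i * (2 * s) powr (-c)"
    proof -
      have "(2 * s) powr (-c) = 2 powr (-c) * s powr (-c)" using s by (simp add: powr_mult)
      moreover have "s powr (b i - c) = s powr b i * s powr (-c)"
        using powr_add[of s "b i" "-c"] by simp
      ultimately show ?thesis by (simp add: C_def)
    qed
    also have "\<dots> \<le> s powr b i * X powr (-c)"
      using X0 X2 c by (intro mult_left_mono powr_mono2') auto
    finally have i2: "C / s \<le> s powr b i * X powr (-c)" .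
    have "C / s * (\<Prod>j\<in>{..<k}-{i}. w j) \<le> s powr b i * X powr (-c) * (\<Prod>j\<in>{..<k}-{i}. (1 - t j) powr b j)"
      using i1 i2 w0 C0 s by (intro mult_mono prod_nonneg) auto
    also have "\<dots> = (\<Prod>j<k. (1 - t j) powr b j) * (1 - (\<Sum>j<k. t j * R j)) powr (-c)"
      by (simp add: split X_def)
    finally show ?thesis using cube by (simp add: lhs ennreal_leI)
  next
    case False
    have "\<exists>j\<in>{..<k}. f j (t j) = 0"
    proof (cases "t i \<in> {1/2..1-d}")
      case True
      with False obtain j where "j<k" "j\<noteq>i" "t j \<notin> {0<..<1/2}" by auto
      then show ?thesis by (auto simp: f_def intro!: bexI[of _ j])
    next
      case False
      then show ?thesis using ik by (auto simp: f_def intro!: bexI[of _ i])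
    qed
    then have "(\<Prod>j<k. f j (t j)) = 0" by (intro prod_zero) auto
    then show ?thesis by (simp only: zero_le)
  qed
  have meas: "f j \<in> borel_measurable borel" for j
    unfolding f_def by (cases "j = i") simp_all
  have "(\<integral>\<^sup>+ t. (\<Prod>j<k. f j (t j)) \<partial>PiM {..<k} (\<lambda>_. lborel)) = (\<Prod>j<k. \<integral>\<^sup>+ x. f j x \<partial>lborel)"
    using meas by (intro PiM_lborel_prod) auto
  also have "\<dots> = (\<integral>\<^sup>+ x. f i x \<partial>lborel) * (\<Prod>j\<in>{..<k}-{i}. \<integral>\<^sup>+ x. f j x \<partial>lborel)"
    using ik by (simp add: prod.remove)
  also have "(\<integral>\<^sup>+ x. f i x \<partial>lborel) = ennreal (C * (- ln d - ln 2))"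
    unfolding f_def using d0 d2 C0 by (simp add: FTC_part)
  also have "(\<Prod>j\<in>{..<k}-{i}. \<integral>\<^sup>+ x. f j x \<partial>lborel) = (\<Prod>j\<in>{..<k}-{i}. ennreal (w j * (1/2)))"
    using w0 by (intro prod.cong refl)
      (auto simp: f_def mult.commute[of "indicator _ _"] nn_integral_cmult_indicator half_enn)
  also have "\<dots> = ennreal (\<Prod>j\<in>{..<k}-{i}. w j * (1/2))"
    using w0 by (intro prod_ennreal) simp
  finally have eq0: "(\<integral>\<^sup>+ t. (\<Prod>j<k. f j (t j)) \<partial>PiM {..<k} (\<lambda>_. lborel))
     = ennreal (C * (- ln d - ln 2)) * ennreal (\<Prod>j\<in>{..<k}-{i}. w j * (1/2))" .
  have "ln d \<le> ln (1/2)" using d0 d2 by simp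
  then have L: "0 \<le> - ln d - ln 2" by (simp add: ln_div)
  have P: "0 \<le> (\<Prod>j\<in>{..<k}-{i}. w j * (1/2))" using w0 by (simp add: prod_nonneg)
  have eq: "(\<integral>\<^sup>+ t. (\<Prod>j<k. f j (t j)) \<partial>PiM {..<k} (\<lambda>_. lborel))
     = ennreal ((\<Prod>j\<in>{..<k}-{i}. w j * (1/2)) * (C * (- ln d - ln 2)))"
    unfolding eq0 using L P C0 by (metis ennreal_mult mult.commute mult_nonneg_nonneg less_imp_le)
  have "(\<integral>\<^sup>+ t. (\<Prod>j<k. f j (t j)) \<partial>PiM {..<k} (\<lambda>_. lborel)) \<le> (\<integral>\<^sup>+ t. indicator (unit_cube k) t * ennreal ((\<Prod>j<k. (1 - t j) powr b j) *
           (1 - (\<Sum>j<k. t j * R j)) powr (-c)) \<partial>PiM {..<k} (\<lambda>_. lborel))"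
    by (intro nn_integral_mono pt)
  then show ?thesis unfolding eq by (simp add: w_def C_def)
qed

lemma case1_lb:
  fixes b :: "nat \<Rightarrow> real" and c d :: real and R :: "nat \<Rightarrow> real"
  assumes R0: "\<And>j. j<k \<Longrightarrow> 0 \<le> R j" and dR: "d = 1 - (\<Sum>j<k. R j)"
    and d0: "0 < d" and d1: "d < 1" and c: "0 \<le> c"
  shows "ennreal ((2*d) powr (-c) * (\<Prod>j<k. d powr b j * 2 powr (-\<bar>b j\<bar>) * (d/2)))
    \<le> (\<integral>\<^sup>+ t. indicator (unit_cube k) t * ennreal ((\<Prod>j<k. (1 - t j) powr b j) *
           (1 - (\<Sum>j<k. t j * R j)) powr (-c)) \<partial>PiM {..<k} (\<lambda>_. lborel))"
proof -
  define w where "w j = d powr b j * 2 powr (-\<bar>b j\<bar>)" for j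
  define J where "J = {1-d..1-d/2}"
  have w0: "0 \<le> w j" for j unfolding w_def by simp
  have pt: "ennreal ((2*d) powr (-c)) * (\<Prod>j<k. indicator J (t j) * ennreal (w j))
     \<le> indicator (unit_cube k) t * ennreal ((\<Prod>j<k. (1 - t j) powr b j) *
           (1 - (\<Sum>j<k. t j * R j)) powr (-c))" for t
  proof (cases "\<forall>j<k. t j \<in> J")
    case True
    have tJ: "1 - d \<le> t j" "t j \<le> 1 - d/2" if "j < k" for j
      using True that unfolding J_def by auto
    have cb: "0 < t j \<and> t j < 1" if "j<k" for j using tJ[OF that] d0 d1 by linarith
    have st: "d/2 \<le> 1 - t j" "1 - t j \<le> d" if "j<k" for j using tJ[OF that] by auto
    have t1: "t j \<le> 1" if "j<k" for j using cb[OF that] by simp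
    have cube: "t \<in> unit_cube k" using cb by (simp add: unit_cube_def)
    have p1: "(\<Prod>j<k. indicator J (t j) * ennreal (w j)) = ennreal (\<Prod>j<k. w j)"
      using True w0 by (simp add: prod_ennreal)
    have i1: "(\<Prod>j<k. w j) \<le> (\<Prod>j<k. (1 - t j) powr b j)"
      unfolding w_def using st d0 by (intro prod_mono conjI powr_lb) auto
    have eq: "1 - (\<Sum>j<k. t j * R j) = d + (\<Sum>j<k. (1 - t j) * R j)"
      by (simp add: dR algebra_simps sum_subtractf)
    have s0: "0 \<le> (\<Sum>j<k. (1 - t j) * R j)"
      using st t1 R0 d0 by (intro sum_nonneg mult_nonneg_nonneg) auto
    have "(\<Sum>j<k. (1 - t j) * R j) \<le> (\<Sum>j<k. d * R j)"
      using st t1 R0 by (intro sum_mono mult_right_mono) auto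
    also have "\<dots> = d * (1 - d)" by (simp add: dR sum_distrib_left)
    also have "\<dots> \<le> d" using d0 d1 by (simp add: algebra_simps)
    finally have s1: "(\<Sum>j<k. (1 - t j) * R j) \<le> d" .
    have i2: "(2*d) powr (-c) \<le> (1 - (\<Sum>j<k. t j * R j)) powr (-c)"
      unfolding eq using s0 s1 c d0 by (intro powr_mono2') auto
    have "(2*d) powr (-c) * (\<Prod>j<k. w j) \<le> (\<Prod>j<k. (1 - t j) powr b j) *
           (1 - (\<Sum>j<k. t j * R j)) powr (-c)"
      using i1 i2 w0 by (subst mult.commute) (intro mult_mono prod_nonneg, auto)
    then show ?thesis using cube w0
      by (simp add: p1 ennreal_mult'[symmetric] prod_nonneg ennreal_leI)
  next
    case False
    then obtain j where "j < k" "t j \<notin> J" by auto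
    then have "(\<Prod>j<k. indicator J (t j) * ennreal (w j)) = (0::ennreal)"
      by (intro prod_zero) (auto intro!: bexI[of _ j])
    then show ?thesis by (simp only: mult_zero_right zero_le)
  qed
  have "(\<integral>\<^sup>+ t. ennreal ((2*d) powr (-c)) * (\<Prod>j<k. indicator J (t j) * ennreal (w j)) \<partial>PiM {..<k} (\<lambda>_. lborel))
     = ennreal ((2*d) powr (-c)) * (\<integral>\<^sup>+ t. (\<Prod>j<k. indicator J (t j) * ennreal (w j)) \<partial>PiM {..<k} (\<lambda>_. lborel))"
    unfolding J_def by (intro nn_integral_cmult) measurable
  also have "(\<integral>\<^sup>+ t. (\<Prod>j<k. indicator J (t j) * ennreal (w j)) \<partial>PiM {..<k} (\<lambda>_. lborel))
     = (\<Prod>j<k. \<integral>\<^sup>+ x. indicator J x * ennreal (w j) \<partial>lborel)"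
    unfolding J_def by (intro PiM_lborel_prod) auto
  also have "\<dots> = (\<Prod>j<k. ennreal (w j * (d/2)))"
    unfolding J_def using d0 w0
    by (intro prod.cong refl) (simp add: mult.commute[of "indicator _ _"] nn_integral_cmult_indicator ennreal_mult[symmetric])
  also have "\<dots> = ennreal (\<Prod>j<k. w j * (d/2))"
    using w0 d0 by (intro prod_ennreal) simp
  finally have "ennreal ((2*d) powr (-c) * (\<Prod>j<k. w j * (d/2))) =
     (\<integral>\<^sup>+ t. ennreal ((2*d) powr (-c)) * (\<Prod>j<k. indicator J (t j) * ennreal (w j)) \<partial>PiM {..<k} (\<lambda>_. lborel))"
    using w0 d0 by (simp add: ennreal_mult' prod_nonneg)
  also have "\<dots> \<le> (\<integral>\<^sup>+ t. indicator (unit_cube k) t * ennreal ((\<Prod>j<k. (1 - t j) powr b j) *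
           (1 - (\<Sum>j<k. t j * R j)) powr (-c)) \<partial>PiM {..<k} (\<lambda>_. lborel))"
    by (intro nn_integral_mono pt)
  finally show ?thesis by (simp add: w_def)
qed

theorem theorem5p1:
  fixes n k :: nat and a :: real and p :: "nat \<Rightarrow> nat"
    and r :: "nat \<Rightarrow> nat \<Rightarrow> real"
  assumes k_pos: "k \<ge> 1"
    and a_range: "2 < a" "a \<le> 4"
    and p_pos: "\<And>j. j < k \<Longrightarrow> p j \<ge> 1"
    and full_rank: "(\<Sum>j<k. p j) + 1 \<le> n"
    and r_nonneg: "\<And>m j. j < k \<Longrightarrow> 0 \<le> r m j"
    and r_lt1: "\<And>m. (\<Sum>j<k. r m j) < 1"
    and conds:
      "((\<lambda>m. \<Sum>j<k. r m j) \<longlonglongrightarrow> 1 \<and>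
          real n > real k * (a - 2) + real (\<Sum>j<k. p j) + 1)
       \<or> (\<exists>i<k. (\<lambda>m. r m i) \<longlonglongrightarrow> 1 \<and> real n \<ge> a + real (p i) - 1)"
  shows "(\<lambda>m. block_hyper_g_BF n a k p (r m)) \<longlonglongrightarrow> \<infinity>"
proof -
  define b where "b j = (a + real (p j)) / 2 - 2" for j
  define c where "c = (real n - 1) / 2"
  define A where "A = ((a - 2) / 2) ^ k"
  define G where "G R = (\<integral>\<^sup>+ t. indicator (unit_cube k) t * ennreal ((\<Prod>j<k. (1 - t j) powr b j) *
           (1 - (\<Sum>j<k. t j * R j)) powr (-c)) \<partial>PiM {..<k} (\<lambda>_. lborel))" for R
  have BF: "block_hyper_g_BF n a k p R = ennreal A * G R" for R
    unfolding block_hyper_g_BF_def G_def A_def b_def c_def by (simp add: minus_divide_left)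
  have A0: "0 < A" unfolding A_def using a_range by simp
  have c0: "0 \<le> c" unfolding c_def using full_rank by simp
  from conds show ?thesis
  proof
    assume H: "(\<lambda>m. \<Sum>j<k. r m j) \<longlonglongrightarrow> 1 \<and>
          real n > real k * (a - 2) + real (\<Sum>j<k. p j) + 1"
    define d where "d m = 1 - (\<Sum>j<k. r m j)" for m
    have d0: "0 < d m" for m using r_lt1[of m] unfolding d_def by simp
    have dlim: "d \<longlonglongrightarrow> 0"
      unfolding d_def using tendsto_diff[OF tendsto_const[of 1] conjunct1[OF H]] by simp
    have ev1: "eventually (\<lambda>m. d m < 1) sequentially"
      using dlim by (rule order_tendstoD) simp
    define E where "E = (\<Sum>j<k. b j + 1) - c"
    define K where "K = A * 2 powr (-c) * (\<Prod>j<k. 2 powr (-\<bar>b j\<bar>) / 2)"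
    have "(\<Sum>j<k. b j + 1) = (\<Sum>j<k. (a - 2) / 2 + real (p j) / 2)"
      by (intro sum.cong refl) (simp add: b_def field_simps)
    also have "\<dots> = real k * (a - 2) / 2 + real (\<Sum>j<k. p j) / 2"
      by (simp add: sum.distrib sum_divide_distrib[symmetric])
    finally have "(\<Sum>j<k. b j + 1) = real k * (a - 2) / 2 + real (\<Sum>j<k. p j) / 2" .
    then have E0: "E < 0" unfolding E_def c_def using H by simp
    have K0: "0 < K" unfolding K_def using A0 by (simp add: prod_pos)
    have eqv: "A * ((2 * d m) powr (-c) * (\<Prod>j<k. d m powr b j * 2 powr (-\<bar>b j\<bar>) * (d m / 2)))
       = K * d m powr E" for m
    proof -
      have dm: "0 < d m" by (rule d0)
      have "(\<Prod>j<k. d m powr b j * 2 powr (-\<bar>b j\<bar>) * (d m / 2))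
          = (\<Prod>j<k. (2 powr (-\<bar>b j\<bar>) / 2) * d m powr (b j + 1))"
        using dm by (intro prod.cong refl) (simp add: powr_add)
      also have "\<dots> = (\<Prod>j<k. 2 powr (-\<bar>b j\<bar>) / 2) * (\<Prod>j<k. d m powr (b j + 1))"
        by (rule prod.distrib)
      also have "(\<Prod>j<k. d m powr (b j + 1)) = d m powr (\<Sum>j<k. b j + 1)"
        using dm by (simp add: powr_sum)
      finally have P: "(\<Prod>j<k. d m powr b j * 2 powr (-\<bar>b j\<bar>) * (d m / 2))
          = (\<Prod>j<k. 2 powr (-\<bar>b j\<bar>) / 2) * d m powr (\<Sum>j<k. b j + 1)" .
      have Q: "(2 * d m) powr (-c) = 2 powr (-c) * d m powr (-c)" using dm by (simp add: powr_mult)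
      have R: "d m powr (\<Sum>j<k. b j + 1) * d m powr (-c) = d m powr E"
        unfolding E_def using powr_add[of "d m" "\<Sum>j<k. b j + 1" "-c"] by simp
      show ?thesis unfolding P Q K_def R[symmetric] by (simp add: ac_simps)
    qed
    have lb: "eventually (\<lambda>m. ennreal (K * d m powr E) \<le> block_hyper_g_BF n a k p (r m)) sequentially"
      using ev1
    proof (rule eventually_mono)
      fix m assume dm1: "d m < 1"
      have "ennreal ((2 * d m) powr (-c) * (\<Prod>j<k. d m powr b j * 2 powr (-\<bar>b j\<bar>) * (d m / 2))) \<le> G (r m)"
        unfolding G_def using r_nonneg d0 dm1 c0 by (intro case1_lb) (auto simp: d_def)
      then have "ennreal A * ennreal ((2 * d m) powr (-c) * (\<Prod>j<k. d m powr b j * 2 powr (-\<bar>b j\<bar>) * (d m / 2)))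
          \<le> block_hyper_g_BF n a k p (r m)"
        unfolding BF by (rule mult_left_mono) simp
      then show "ennreal (K * d m powr E) \<le> block_hyper_g_BF n a k p (r m)"
        by (simp only: ennreal_mult'[symmetric, OF less_imp_le[OF A0]] eqv)
    qed
    have "filterlim d (at_right 0) sequentially"
      using dlim d0 by (intro tendsto_imp_filterlim_at_right) auto
    then have "filterlim (\<lambda>m. d m powr E) at_top sequentially"
      using filterlim_compose[OF powr_neg_at_right[OF E0]] by blast
    then have "filterlim (\<lambda>m. K * d m powr E) at_top sequentially"
      by (rule filterlim_tendsto_pos_mult_at_top[OF tendsto_const K0])
    then show ?thesis by (rule tendsto_top_lb[OF lb])
  next
    assume "\<exists>i<k. (\<lambda>m. r m i) \<longlonglongrightarrow> 1 \<and> real n \<ge> a + real (p i) - 1"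
    then obtain i where ik: "i < k" and ri: "(\<lambda>m. r m i) \<longlonglongrightarrow> 1"
      and ni: "real n \<ge> a + real (p i) - 1" by blast
    define d where "d m = 1 - r m i" for m
    have d0: "0 < d m" for m
    proof -
      have "r m i \<le> (\<Sum>j<k. r m j)"
        using ik r_nonneg by (intro member_le_sum) auto
      then show ?thesis using r_lt1[of m] unfolding d_def by simp
    qed
    have dlim: "d \<longlonglongrightarrow> 0"
      unfolding d_def using tendsto_diff[OF tendsto_const[of 1] ri] by simp
    have ev1: "eventually (\<lambda>m. d m < 1/2) sequentially"
      using dlim by (rule order_tendstoD) simp
    have bc: "b i - c \<le> -1" unfolding b_def c_def using ni by (simp add: field_simps)
    define K where "K = A * (\<Prod>j\<in>{..<k}-{i}. 2 powr (-\<bar>b j\<bar>) * (1/2)) * 2 powr (-c)"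
    have K0: "0 < K" unfolding K_def using A0 by (simp add: prod_pos)
    have lb: "eventually (\<lambda>m. ennreal (K * (- ln (d m) - ln 2)) \<le> block_hyper_g_BF n a k p (r m)) sequentially"
      using ev1
    proof (rule eventually_mono)
      fix m assume dm1: "d m < 1/2"
      have "ln (d m) \<le> ln (1/2)" using d0[of m] dm1 by simp
      then have L: "0 \<le> - ln (d m) - ln 2" by (simp add: ln_div)
      have "ennreal ((\<Prod>j\<in>{..<k}-{i}. 2 powr (-\<bar>b j\<bar>) * (1/2)) * (2 powr (-c) * (- ln (d m) - ln 2))) \<le> G (r m)"
        unfolding G_def using r_nonneg d0 dm1 c0 ik r_lt1 bc by (intro case2_lb) (auto simp: d_def)
      then have "ennreal A * ennreal ((\<Prod>j\<in>{..<k}-{i}. 2 powr (-\<bar>b j\<bar>) * (1/2)) * (2 powr (-c) * (- ln (d m) - ln 2)))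
          \<le> block_hyper_g_BF n a k p (r m)"
        unfolding BF by (rule mult_left_mono) simp
      moreover have eqK: "A * ((\<Prod>j\<in>{..<k}-{i}. 2 powr (-\<bar>b j\<bar>) * (1/2)) * (2 powr (-c) * (- ln (d m) - ln 2)))
          = K * (- ln (d m) - ln 2)" unfolding K_def by (simp add: ac_simps)
      ultimately show "ennreal (K * (- ln (d m) - ln 2)) \<le> block_hyper_g_BF n a k p (r m)"
        by (simp only: ennreal_mult'[symmetric, OF less_imp_le[OF A0]] eqK)
    qed
    have "filterlim (\<lambda>m. - ln (d m) - ln 2) at_top sequentially"
      using dlim d0 by (rule neg_ln_lim)
    then have "filterlim (\<lambda>m. K * (- ln (d m) - ln 2)) at_top sequentially"
      by (rule filterlim_tendsto_pos_mult_at_top[OF tendsto_const K0])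
    then show ?thesis by (rule tendsto_top_lb[OF lb])
  qed
qed

end
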